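(* Consider binary treatments $A\in\{0,1\}$, observed confounders $X\in\mathcal{X}$, unobserved confounders $U\in\mathcal{U}$, and outcomes $Y\in\mathcal{Y}$, and a fixed observational distribution $\mathbb{P}_\mathrm{obs}$ of $(X,A,Y)$. Let $\Gamma$ be a sensitivity parameter. For full distributions $\mathbb{P}$ of $(X,U,A,Y)$, write $\mathbb{P}(a\mid x)$ for the observed treatment probability and define $$\rho(x,u,a)=\frac{1}{1-\mathbb{P}(a\mid x)}\left(\frac{\mathbb{P}(u\mid x)}{\mathbb{P}(u\mid x,a)}-\mathbb{P}(a\mid x)\right),$$ $$\rho(x,u_1,u_2,a)=\frac{\mathbb{P}(u_1\mid x,a)\mathbb{P}(u_2\mid x)-\mathbb{P}(u_1\mid x,a)\mathbb{P}(u_2\mid x,a)\mathbb{P}(a\mid x)}{\mathbb{P}(u_2\mid x,a)\mathbb{P}(u_1\mid x)-\mathbb{P}(u_1\mid x,a)\mathbb{P}(u_2\mid x,a)\mathbb{P}(a\mid x)}.$$ Then the marginal sensitivity model (MSM), every $f$-sensitivity model, and Rosenbaum's sensitivity model, each with sensitivity parameter $\Gamma$, are generalized treatment sensitivity models (GTSMs) with sensitivity parameter $\Gamma$, namely with the following functionals: (i) MSM: $\mathcal{D}_{x,a}(\mathbb{P}(U\mid x),\mathbb{P}(U\mid x,a))=\max\{\sup_{u\in\mathcal{U}}\rho(x,u,a),\ \sup_{u\in\mathcal{U}}\rho(x,u,a)^{-1}\}$; (ii) $f$-sensitivity model: $\mathcal{D}_{x,a}(\mathbb{P}(U\mid x),\mathbb{P}(U\mid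 x,a))=\max\{\int_\mathcal{U} f(\rho(x,u,a))\,\mathbb{P}(u\mid x,a)\,du,\ \int_\mathcal{U} f(\rho(x,u,a)^{-1})\,\mathbb{P}(u\mid x,a)\,du\}$; (iii) Rosenbaum's model: $\mathcal{D}_{x,a}(\mathbb{P}(U\mid x),\mathbb{P}(U\mid x,a))=\max\{\sup_{u_1,u_2\in\mathcal{U}}\rho(x,u_1,u_2,a),\ \sup_{u_1,u_2\in\mathcal{U}}\rho(x,u_1,u_2,a)^{-1}\}$.
   Context: A sensitivity model $\mathcal{M}$ is a family of probability distributions $\mathbb{P}$ on $\mathcal{X}\times\mathcal{U}\times\mathcal{A}\times\mathcal{Y}$ (for arbitrary finite-dimensional $\mathcal{U}$) with $\int_\mathcal{U}\mathbb{P}(x,u,a,y)\,du=\mathbb{P}_\mathrm{obs}(x,a,y)$ for all $\mathbb{P}\in\mathcal{M}$. A GTSM is a sensitivity model containing all $\mathbb{P}$ satisfying $\mathcal{D}_{x,a}(\mathbb{P}(U\mid x),\mathbb{P}(U\mid x,a))\le\Gamma$ for all $x\in\mathcal{X}$, $a\in\mathcal{A}$, where $\mathcal{D}_{x,a}$ is a functional of distributions and $\Gamma\ge0$. Let $\mathrm{OR}(a,b)=\frac{a}{1-a}\frac{1-b}{b}$, $\pi(x)=\mathbb{P}(A=1\mid x)$, $\pi(x,u)=\mathbb{P}(A=1\mid x,u)$. The MSM with parameter $\Gamma\ge1$ is the family of all $\mathbb{P}$ (compatible with $\mathbb{P}_\mathrm{obs}$) with $1/\Gamma\le\mathrm{OR}(\pi(x),\pi(x,u))\le\Gamma$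 for all $x,u$. For a convex $f:\mathbb{R}_{>0}\to\mathbb{R}$ with $f(1)=0$, the $f$-sensitivity model is the family of all $\mathbb{P}$ with $\max\{\int_\mathcal{U} f(\mathrm{OR}(\pi(x),\pi(x,u)))\mathbb{P}(u\mid x,A=1)du,\ \int_\mathcal{U} f(\mathrm{OR}^{-1}(\pi(x),\pi(x,u)))\mathbb{P}(u\mid x,A=1)du\}\le\Gamma$ for all $x$. Rosenbaum's sensitivity model is the family of all $\mathbb{P}$ with $1/\Gamma\le\mathrm{OR}(\pi(x,u_1),\pi(x,u_2))\le\Gamma$ for all $x,u_1,u_2$. Densities are with respect to Lebesgue measure (or probability mass functions for discrete variables). *)

theory Defs
  imports "HOL-Analysis.Analysis"
begin

text \<open>Full distributions of (X,U,A,Y) are given by a joint density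
  p x u a y with respect to MX, MU, counting measure on bool (A), and MY.
  The treatment A is boolean: True = 1, False = 0.\<close>

definition OR :: "real \<Rightarrow> real \<Rightarrow> real" where
  "OR a b = a / (1 - a) * ((1 - b) / b)"

definition dens_xua :: "'y measure \<Rightarrow> ('x \<Rightarrow> 'u \<Rightarrow> bool \<Rightarrow> 'y \<Rightarrow> real) \<Rightarrow> 'x \<Rightarrow> 'u \<Rightarrow> bool \<Rightarrow> real" where
  "dens_xua MY p x u a = enn2real (\<integral>\<^sup>+ y. ennreal (p x u a y) \<partial>MY)"

definition dens_xu :: "'y measure \<Rightarrow> ('x \<Rightarrow> 'u \<Rightarrow> bool \<Rightarrow> 'y \<Rightarrow> real) \<Rightarrow> 'x \<Rightarrow> 'u \<Rightarrow> real" where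
  "dens_xu MY p x u = dens_xua MY p x u True + dens_xua MY p x u False"

definition dens_xa :: "'u measure \<Rightarrow> 'y measure \<Rightarrow> ('x \<Rightarrow> 'u \<Rightarrow> bool \<Rightarrow> 'y \<Rightarrow> real) \<Rightarrow> 'x \<Rightarrow> bool \<Rightarrow> real" where
  "dens_xa MU MY p x a = enn2real (\<integral>\<^sup>+ u. ennreal (dens_xua MY p x u a) \<partial>MU)"

definition dens_x :: "'u measure \<Rightarrow> 'y measure \<Rightarrow> ('x \<Rightarrow> 'u \<Rightarrow> bool \<Rightarrow> 'y \<Rightarrow> real) \<Rightarrow> 'x \<Rightarrow> real" where
  "dens_x MU MY p x = dens_xa MU MY p x True + dens_xa MU MY p x False"

definition cond_u_x :: "'u measure \<Rightarrow> 'y measure \<Rightarrow> ('x \<Rightarrow> 'u \<Rightarrow> bool \<Rightarrow> 'y \<Rightarrow> real) \<Rightarrow> 'x \<Rightarrow> 'u \<Rightarrow> real" where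
  "cond_u_x MU MY p x u = dens_xu MY p x u / dens_x MU MY p x"

definition cond_u_xa :: "'u measure \<Rightarrow> 'y measure \<Rightarrow> ('x \<Rightarrow> 'u \<Rightarrow> bool \<Rightarrow> 'y \<Rightarrow> real) \<Rightarrow> 'x \<Rightarrow> bool \<Rightarrow> 'u \<Rightarrow> real" where
  "cond_u_xa MU MY p x a u = dens_xua MY p x u a / dens_xa MU MY p x a"

definition cond_a_x :: "'u measure \<Rightarrow> 'y measure \<Rightarrow> ('x \<Rightarrow> 'u \<Rightarrow> bool \<Rightarrow> 'y \<Rightarrow> real) \<Rightarrow> 'x \<Rightarrow> bool \<Rightarrow> real" where
  "cond_a_x MU MY p x a = dens_xa MU MY p x a / dens_x MU MY p x"

definition prop_x :: "'u measure \<Rightarrow> 'y measure \<Rightarrow> ('x \<Rightarrow> 'u \<Rightarrow> bool \<Rightarrow> 'y \<Rightarrow> real) \<Rightarrow> 'x \<Rightarrow> real" where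
  "prop_x MU MY p x = cond_a_x MU MY p x True"

definition prop_xu :: "'y measure \<Rightarrow> ('x \<Rightarrow> 'u \<Rightarrow> bool \<Rightarrow> 'y \<Rightarrow> real) \<Rightarrow> 'x \<Rightarrow> 'u \<Rightarrow> real" where
  "prop_xu MY p x u = dens_xua MY p x u True / dens_xu MY p x u"

text \<open>Regular full distributions: a measurable nonnegative joint density of total mass 1,
  all of whose (x,u,a)- and (x,a)-marginal densities are strictly positive and finite,
  so that all conditionals are well defined.\<close>
definition full_dist :: "'x measure \<Rightarrow> 'u measure \<Rightarrow> 'y measure \<Rightarrow> ('x \<Rightarrow> 'u \<Rightarrow> bool \<Rightarrow> 'y \<Rightarrow> real) \<Rightarrow> bool" where
  "full_dist MX MU MY p \<longleftrightarrow>
     (\<forall>x u a y. 0 \<le> p x u a y) \<and>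
     (\<lambda>(x, u, a, y). p x u a y) \<in> borel_measurable (MX \<Otimes>\<^sub>M MU \<Otimes>\<^sub>M count_space UNIV \<Otimes>\<^sub>M MY) \<and>
     (\<integral>\<^sup>+ (x, u, a, y). ennreal (p x u a y) \<partial>(MX \<Otimes>\<^sub>M MU \<Otimes>\<^sub>M count_space UNIV \<Otimes>\<^sub>M MY)) = 1 \<and>
     (\<forall>x\<in>space MX. \<forall>u\<in>space MU. \<forall>a.
        0 < (\<integral>\<^sup>+ y. ennreal (p x u a y) \<partial>MY) \<and> (\<integral>\<^sup>+ y. ennreal (p x u a y) \<partial>MY) < \<infinity>) \<and>
     (\<forall>x\<in>space MX. \<forall>a.
        0 < (\<integral>\<^sup>+ u. ennreal (dens_xua MY p x u a) \<partial>MU) \<and>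
        (\<integral>\<^sup>+ u. ennreal (dens_xua MY p x u a) \<partial>MU) < \<infinity>)"

definition compatible :: "'x measure \<Rightarrow> 'u measure \<Rightarrow> 'y measure \<Rightarrow> ('x \<Rightarrow> bool \<Rightarrow> 'y \<Rightarrow> real)
    \<Rightarrow> ('x \<Rightarrow> 'u \<Rightarrow> bool \<Rightarrow> 'y \<Rightarrow> real) \<Rightarrow> bool" where
  "compatible MX MU MY pobs p \<longleftrightarrow>
     (\<forall>x\<in>space MX. \<forall>a. \<forall>y\<in>space MY. (\<integral>\<^sup>+ u. ennreal (p x u a y) \<partial>MU) = ennreal (pobs x a y))"

definition dists :: "'x measure \<Rightarrow> 'u measure \<Rightarrow> 'y measure \<Rightarrow> ('x \<Rightarrow> bool \<Rightarrow> 'y \<Rightarrow> real)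
    \<Rightarrow> ('x \<Rightarrow> 'u \<Rightarrow> bool \<Rightarrow> 'y \<Rightarrow> real) set" where
  "dists MX MU MY pobs = {p. full_dist MX MU MY p \<and> compatible MX MU MY pobs p}"

definition is_GTSM :: "'x measure \<Rightarrow> 'u measure \<Rightarrow> 'y measure \<Rightarrow> ('x \<Rightarrow> bool \<Rightarrow> 'y \<Rightarrow> real)
    \<Rightarrow> ('x \<Rightarrow> 'u \<Rightarrow> bool \<Rightarrow> 'y \<Rightarrow> real) set
    \<Rightarrow> (('x \<Rightarrow> 'u \<Rightarrow> bool \<Rightarrow> 'y \<Rightarrow> real) \<Rightarrow> 'x \<Rightarrow> bool \<Rightarrow> ereal) \<Rightarrow> real \<Rightarrow> bool" where
  "is_GTSM MX MU MY pobs M D \<Gamma> \<longleftrightarrow>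
     M \<subseteq> dists MX MU MY pobs \<and>
     (\<forall>p\<in>dists MX MU MY pobs. (\<forall>x\<in>space MX. \<forall>a. D p x a \<le> ereal \<Gamma>) \<longrightarrow> p \<in> M)"

definition ext_int :: "'u measure \<Rightarrow> ('u \<Rightarrow> real) \<Rightarrow> ereal" where
  "ext_int M g = enn2ereal (\<integral>\<^sup>+ u. ennreal (g u) \<partial>M) - enn2ereal (\<integral>\<^sup>+ u. ennreal (- g u) \<partial>M)"

definition rho :: "'u measure \<Rightarrow> 'y measure \<Rightarrow> ('x \<Rightarrow> 'u \<Rightarrow> bool \<Rightarrow> 'y \<Rightarrow> real) \<Rightarrow> 'x \<Rightarrow> 'u \<Rightarrow> bool \<Rightarrow> real" where
  "rho MU MY p x u a =
     1 / (1 - cond_a_x MU MY p x a) * (cond_u_x MU MY p x u / cond_u_xa MU MY p x a u - cond_a_x MU MY p x a)"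

definition rho2 :: "'u measure \<Rightarrow> 'y measure \<Rightarrow> ('x \<Rightarrow> 'u \<Rightarrow> bool \<Rightarrow> 'y \<Rightarrow> real) \<Rightarrow> 'x \<Rightarrow> 'u \<Rightarrow> 'u \<Rightarrow> bool \<Rightarrow> real" where
  "rho2 MU MY p x u1 u2 a =
     (cond_u_xa MU MY p x a u1 * cond_u_x MU MY p x u2
        - cond_u_xa MU MY p x a u1 * cond_u_xa MU MY p x a u2 * cond_a_x MU MY p x a) /
     (cond_u_xa MU MY p x a u2 * cond_u_x MU MY p x u1
        - cond_u_xa MU MY p x a u1 * cond_u_xa MU MY p x a u2 * cond_a_x MU MY p x a)"

definition D_msm :: "'u measure \<Rightarrow> 'y measure \<Rightarrow> ('x \<Rightarrow> 'u \<Rightarrow> bool \<Rightarrow> 'y \<Rightarrow> real) \<Rightarrow> 'x \<Rightarrow> bool \<Rightarrow> ereal" where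
  "D_msm MU MY p x a =
     max (SUP u\<in>space MU. ereal (rho MU MY p x u a)) (SUP u\<in>space MU. ereal (inverse (rho MU MY p x u a)))"

definition D_f :: "'u measure \<Rightarrow> 'y measure \<Rightarrow> (real \<Rightarrow> real) \<Rightarrow> ('x \<Rightarrow> 'u \<Rightarrow> bool \<Rightarrow> 'y \<Rightarrow> real) \<Rightarrow> 'x \<Rightarrow> bool \<Rightarrow> ereal" where
  "D_f MU MY f p x a =
     max (ext_int MU (\<lambda>u. f (rho MU MY p x u a) * cond_u_xa MU MY p x a u))
         (ext_int MU (\<lambda>u. f (inverse (rho MU MY p x u a)) * cond_u_xa MU MY p x a u))"

definition D_ros :: "'u measure \<Rightarrow> 'y measure \<Rightarrow> ('x \<Rightarrow> 'u \<Rightarrow> bool \<Rightarrow> 'y \<Rightarrow> real) \<Rightarrow> 'x \<Rightarrow> bool \<Rightarrow> ereal" where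
  "D_ros MU MY p x a =
     max (SUP (u1, u2)\<in>space MU \<times> space MU. ereal (rho2 MU MY p x u1 u2 a))
         (SUP (u1, u2)\<in>space MU \<times> space MU. ereal (inverse (rho2 MU MY p x u1 u2 a)))"

definition MSM :: "'x measure \<Rightarrow> 'u measure \<Rightarrow> 'y measure \<Rightarrow> ('x \<Rightarrow> bool \<Rightarrow> 'y \<Rightarrow> real) \<Rightarrow> real
    \<Rightarrow> ('x \<Rightarrow> 'u \<Rightarrow> bool \<Rightarrow> 'y \<Rightarrow> real) set" where
  "MSM MX MU MY pobs \<Gamma> = {p \<in> dists MX MU MY pobs.
     \<forall>x\<in>space MX. \<forall>u\<in>space MU.
       1 / \<Gamma> \<le> OR (prop_x MU MY p x) (prop_xu MY p x u) \<and> OR (prop_x MU MY p x) (prop_xu MY p x u) \<le> \<Gamma>}"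

definition fSM :: "'x measure \<Rightarrow> 'u measure \<Rightarrow> 'y measure \<Rightarrow> ('x \<Rightarrow> bool \<Rightarrow> 'y \<Rightarrow> real) \<Rightarrow> (real \<Rightarrow> real) \<Rightarrow> real
    \<Rightarrow> ('x \<Rightarrow> 'u \<Rightarrow> bool \<Rightarrow> 'y \<Rightarrow> real) set" where
  "fSM MX MU MY pobs f \<Gamma> = {p \<in> dists MX MU MY pobs.
     \<forall>x\<in>space MX.
       max (ext_int MU (\<lambda>u. f (OR (prop_x MU MY p x) (prop_xu MY p x u)) * cond_u_xa MU MY p x True u))
           (ext_int MU (\<lambda>u. f (inverse (OR (prop_x MU MY p x) (prop_xu MY p x u))) * cond_u_xa MU MY p x True u))
         \<le> ereal \<Gamma>}"

definition RSM :: "'x measure \<Rightarrow> 'u measure \<Rightarrow> 'y measure \<Rightarrow> ('x \<Rightarrow> bool \<Rightarrow> 'y \<Rightarrow> real) \<Rightarrow> real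
    \<Rightarrow> ('x \<Rightarrow> 'u \<Rightarrow> bool \<Rightarrow> 'y \<Rightarrow> real) set" where
  "RSM MX MU MY pobs \<Gamma> = {p \<in> dists MX MU MY pobs.
     \<forall>x\<in>space MX. \<forall>u1\<in>space MU. \<forall>u2\<in>space MU.
       1 / \<Gamma> \<le> OR (prop_xu MY p x u1) (prop_xu MY p x u2) \<and> OR (prop_xu MY p x u1) (prop_xu MY p x u2) \<le> \<Gamma>}"

end

theory Submission
  imports Defs
begin

lemma pos_facts:
  assumes "p \<in> dists MX MU MY pobs" "x \<in> space MX" "u \<in> space MU"
  shows "dens_xua MY p x u a > 0" "dens_xa MU MY p x a > 0"
proof -
  have fd: "full_dist MX MU MY p" using assms(1) by (simp add: dists_def)
  have "0 < (\<integral>\<^sup>+ y. ennreal (p x u a y) \<partial>MY) \<and> (\<integral>\<^sup>+ y. ennreal (p x u a y) \<partial>MY) < \<infinity>"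
    using fd assms unfolding full_dist_def by blast
  then show "dens_xua MY p x u a > 0" unfolding dens_xua_def
    by (simp add: enn2real_positive_iff)
  have "0 < (\<integral>\<^sup>+ u. ennreal (dens_xua MY p x u a) \<partial>MU) \<and> (\<integral>\<^sup>+ u. ennreal (dens_xua MY p x u a) \<partial>MU) < \<infinity>"
    using fd assms unfolding full_dist_def by blast
  then show "dens_xa MU MY p x a > 0" unfolding dens_xa_def
    by (simp add: enn2real_positive_iff)
qed

lemma algA: fixes d1 d0 e1 e0 :: real assumes "d1>0" "d0>0" "e1>0" "e0>0"
  shows "1 / (1 - e1/(e1+e0)) * (((d1+d0)/(e1+e0)) / (d1/e1) - e1/(e1+e0))
     = (e1/(e1+e0)) / (1 - e1/(e1+e0)) * ((1 - d1/(d1+d0)) / (d1/(d1+d0)))"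
proof -
  have [simp]: "e1+e0 \<noteq> 0" "e0+e1 \<noteq> 0" using assms by auto
  have [simp]: "d1+d0 \<noteq> 0" "d0+d1 \<noteq> 0" using assms by auto
  have c: "1 - e1/(e1+e0) = e0/(e1+e0)" using assms by (simp add: divide_simps; simp add: algebra_simps)
  have d: "1 - d1/(d1+d0) = d0/(d1+d0)" using assms by (simp add: divide_simps; simp add: algebra_simps)
  have l: "((d1+d0)/(e1+e0)) / (d1/e1) - e1/(e1+e0) = e1*d0/((e1+e0)*d1)"
    using assms by (simp add: divide_simps; simp add: algebra_simps)
  show ?thesis unfolding c d l using assms by (simp add: divide_simps; simp add: algebra_simps)
qed
lemma algB: fixes a1 a0 b1 b0 e1 e0 :: real assumes "a1>0" "a0>0" "b1>0" "b0>0" "e1>0" "e0>0"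
  shows "((a1/e1) * ((b1+b0)/(e1+e0)) - (a1/e1)*(b1/e1)*(e1/(e1+e0))) /
         ((b1/e1) * ((a1+a0)/(e1+e0)) - (a1/e1)*(b1/e1)*(e1/(e1+e0)))
     = (a1/(a1+a0)) / (1 - a1/(a1+a0)) * ((1 - b1/(b1+b0)) / (b1/(b1+b0)))"
proof -
  have [simp]: "e1+e0 \<noteq> 0" "e0+e1 \<noteq> 0" "a1+a0 \<noteq> 0" "b1+b0 \<noteq> 0" "a0+a1 \<noteq> 0" "b0+b1 \<noteq> 0" using assms by auto
  have n: "(a1/e1) * ((b1+b0)/(e1+e0)) - (a1/e1)*(b1/e1)*(e1/(e1+e0)) = a1*b0/(e1*(e1+e0))"
    using assms by (simp add: divide_simps; simp add: algebra_simps)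
  have m: "(b1/e1) * ((a1+a0)/(e1+e0)) - (a1/e1)*(b1/e1)*(e1/(e1+e0)) = b1*a0/(e1*(e1+e0))"
    using assms by (simp add: divide_simps; simp add: algebra_simps)
  have c: "1 - a1/(a1+a0) = a0/(a1+a0)" using assms by (simp add: divide_simps; simp add: algebra_simps)
  have d: "1 - b1/(b1+b0) = b0/(b1+b0)" using assms by (simp add: divide_simps; simp add: algebra_simps)
  show ?thesis unfolding n m c d using assms by (simp add: divide_simps; simp add: algebra_simps)
qed

lemma OR_pos: fixes a b :: real assumes "0<a" "a<1" "0<b" "b<1" shows "OR a b > 0"
  using assms unfolding OR_def by simp

lemma frac_01: fixes a b :: real assumes "0<a" "0<b" shows "0 < a/(a+b)" "a/(a+b) < 1"
  using assms by (auto simp: divide_simps)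

lemma rho_eq:
  assumes "p \<in> dists MX MU MY pobs" "x \<in> space MX" "u \<in> space MU"
  shows "rho MU MY p x u True = OR (prop_x MU MY p x) (prop_xu MY p x u)"
    and "rho MU MY p x u True > 0"
proof -
  have d1: "dens_xua MY p x u True > 0" and d0: "dens_xua MY p x u False > 0"
   and e1: "dens_xa MU MY p x True > 0" and e0: "dens_xa MU MY p x False > 0"
    using pos_facts[OF assms] by auto
  show "rho MU MY p x u True = OR (prop_x MU MY p x) (prop_xu MY p x u)"
    unfolding rho_def OR_def prop_x_def prop_xu_def cond_a_x_def cond_u_x_def cond_u_xa_def
      dens_x_def dens_xu_def
    by (rule algA[OF d1 d0 e1 e0])
  then show "rho MU MY p x u True > 0"
    unfolding prop_x_def prop_xu_def cond_a_x_def dens_x_def dens_xu_def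
    using OR_pos frac_01 d1 d0 e1 e0 by presburger
qed

lemma rho2_eq:
  assumes "p \<in> dists MX MU MY pobs" "x \<in> space MX" "u1 \<in> space MU" "u2 \<in> space MU"
  shows "rho2 MU MY p x u1 u2 True = OR (prop_xu MY p x u1) (prop_xu MY p x u2)"
    and "rho2 MU MY p x u1 u2 True > 0"
proof -
  have a1: "dens_xua MY p x u1 True > 0" and a0: "dens_xua MY p x u1 False > 0"
   and b1: "dens_xua MY p x u2 True > 0" and b0: "dens_xua MY p x u2 False > 0"
   and e1: "dens_xa MU MY p x True > 0" and e0: "dens_xa MU MY p x False > 0"
    using pos_facts[OF assms(1,2,3)] pos_facts[OF assms(1,2,4)] by auto
  show "rho2 MU MY p x u1 u2 True = OR (prop_xu MY p x u1) (prop_xu MY p x u2)"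
    unfolding rho2_def OR_def prop_x_def prop_xu_def cond_a_x_def cond_u_x_def cond_u_xa_def
      dens_x_def dens_xu_def
    by (rule algB[OF a1 a0 b1 b0 e1 e0])
  then show "rho2 MU MY p x u1 u2 True > 0"
    unfolding prop_xu_def dens_xu_def
    using OR_pos frac_01 a1 a0 b1 b0 by presburger
qed

lemma inv_bound:
  fixes r G :: real
  assumes "r > 0" "G \<ge> 1" "inverse r \<le> G" shows "1 / G \<le> r"
proof -
  have "1 \<le> G * r" using assms by (simp add: field_simps)
  then show ?thesis using assms by (simp add: field_simps)
qed

theorem lemma1:
  fixes MX :: "'x measure" and MU :: "'u measure" and MY :: "'y measure"
    and pobs :: "'x \<Rightarrow> bool \<Rightarrow> 'y \<Rightarrow> real" and \<Gamma> :: real and f :: "real \<Rightarrow> real"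
  shows "(1 \<le> \<Gamma> \<longrightarrow> is_GTSM MX MU MY pobs (MSM MX MU MY pobs \<Gamma>) (D_msm MU MY) \<Gamma>)
       \<and> (convex_on {0<..} f \<and> f 1 = 0 \<and> 0 \<le> \<Gamma> \<longrightarrow>
            is_GTSM MX MU MY pobs (fSM MX MU MY pobs f \<Gamma>) (D_f MU MY f) \<Gamma>)
       \<and> (1 \<le> \<Gamma> \<longrightarrow> is_GTSM MX MU MY pobs (RSM MX MU MY pobs \<Gamma>) (D_ros MU MY) \<Gamma>)"
proof (intro conjI impI)
  assume G: "1 \<le> \<Gamma>"
  show "is_GTSM MX MU MY pobs (MSM MX MU MY pobs \<Gamma>) (D_msm MU MY) \<Gamma>"
    unfolding is_GTSM_def
  proof (intro conjI ballI impI)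
    show "MSM MX MU MY pobs \<Gamma> \<subseteq> dists MX MU MY pobs" unfolding MSM_def by blast
  next
    fix p assume p: "p \<in> dists MX MU MY pobs" and D: "\<forall>x\<in>space MX. \<forall>a. D_msm MU MY p x a \<le> ereal \<Gamma>"
    have "\<forall>x\<in>space MX. \<forall>u\<in>space MU.
       1 / \<Gamma> \<le> OR (prop_x MU MY p x) (prop_xu MY p x u) \<and> OR (prop_x MU MY p x) (prop_xu MY p x u) \<le> \<Gamma>"
    proof (intro ballI)
      fix x u assume x: "x \<in> space MX" and u: "u \<in> space MU"
      have DD: "D_msm MU MY p x True \<le> ereal \<Gamma>" using D x by blast
      have "ereal (rho MU MY p x u True) \<le> ereal \<Gamma>"
        using DD u unfolding D_msm_def max.bounded_iff by (meson SUP_upper order_trans)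
      moreover have "ereal (inverse (rho MU MY p x u True)) \<le> ereal \<Gamma>"
        using DD u unfolding D_msm_def max.bounded_iff by (meson SUP_upper order_trans)
      ultimately show "1 / \<Gamma> \<le> OR (prop_x MU MY p x) (prop_xu MY p x u) \<and> OR (prop_x MU MY p x) (prop_xu MY p x u) \<le> \<Gamma>"
        using rho_eq[OF p x u] inv_bound G by auto
    qed
    then show "p \<in> MSM MX MU MY pobs \<Gamma>" using p unfolding MSM_def by blast
  qed
next
  assume G: "1 \<le> \<Gamma>"
  show "is_GTSM MX MU MY pobs (RSM MX MU MY pobs \<Gamma>) (D_ros MU MY) \<Gamma>"
    unfolding is_GTSM_def
  proof (intro conjI ballI impI)
    show "RSM MX MU MY pobs \<Gamma> \<subseteq> dists MX MU MY pobs" unfolding RSM_def by blast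
  next
    fix p assume p: "p \<in> dists MX MU MY pobs" and D: "\<forall>x\<in>space MX. \<forall>a. D_ros MU MY p x a \<le> ereal \<Gamma>"
    have "\<forall>x\<in>space MX. \<forall>u1\<in>space MU. \<forall>u2\<in>space MU.
       1 / \<Gamma> \<le> OR (prop_xu MY p x u1) (prop_xu MY p x u2) \<and> OR (prop_xu MY p x u1) (prop_xu MY p x u2) \<le> \<Gamma>"
    proof (intro ballI)
      fix x u1 u2 assume x: "x \<in> space MX" and u1: "u1 \<in> space MU" and u2: "u2 \<in> space MU"
      have DD: "D_ros MU MY p x True \<le> ereal \<Gamma>" using D x by blast
      have uu: "(u1, u2) \<in> space MU \<times> space MU" using u1 u2 by simp
      have "ereal (rho2 MU MY p x u1 u2 True) \<le> ereal \<Gamma>"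
        using DD SUP_upper[OF uu, of "\<lambda>(u1, u2). ereal (rho2 MU MY p x u1 u2 True)"]
        unfolding D_ros_def max.bounded_iff case_prod_conv by (meson order_trans)
      moreover have "ereal (inverse (rho2 MU MY p x u1 u2 True)) \<le> ereal \<Gamma>"
        using DD SUP_upper[OF uu, of "\<lambda>(u1, u2). ereal (inverse (rho2 MU MY p x u1 u2 True))"]
        unfolding D_ros_def max.bounded_iff case_prod_conv by (meson order_trans)
      ultimately show "1 / \<Gamma> \<le> OR (prop_xu MY p x u1) (prop_xu MY p x u2) \<and> OR (prop_xu MY p x u1) (prop_xu MY p x u2) \<le> \<Gamma>"
        using rho2_eq[OF p x u1 u2] inv_bound G by auto
    qed
    then show "p \<in> RSM MX MU MY pobs \<Gamma>" using p unfolding RSM_def by blast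
  qed
next
  assume "convex_on {0<..} f \<and> f 1 = 0 \<and> 0 \<le> \<Gamma>"
  show "is_GTSM MX MU MY pobs (fSM MX MU MY pobs f \<Gamma>) (D_f MU MY f) \<Gamma>"
    unfolding is_GTSM_def
  proof (intro conjI ballI impI)
    show "fSM MX MU MY pobs f \<Gamma> \<subseteq> dists MX MU MY pobs" unfolding fSM_def by blast
  next
    fix p assume p: "p \<in> dists MX MU MY pobs" and D: "\<forall>x\<in>space MX. \<forall>a. D_f MU MY f p x a \<le> ereal \<Gamma>"
    have "\<forall>x\<in>space MX.
       max (ext_int MU (\<lambda>u. f (OR (prop_x MU MY p x) (prop_xu MY p x u)) * cond_u_xa MU MY p x True u))
           (ext_int MU (\<lambda>u. f (inverse (OR (prop_x MU MY p x) (prop_xu MY p x u))) * cond_u_xa MU MY p x True u))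
         \<le> ereal \<Gamma>"
    proof (intro ballI)
      fix x assume x: "x \<in> space MX"
      have e1: "ext_int MU (\<lambda>u. f (OR (prop_x MU MY p x) (prop_xu MY p x u)) * cond_u_xa MU MY p x True u)
          = ext_int MU (\<lambda>u. f (rho MU MY p x u True) * cond_u_xa MU MY p x True u)"
        unfolding ext_int_def
        by (simp add: rho_eq(1)[OF p x] cong: nn_integral_cong)
      have e2: "ext_int MU (\<lambda>u. f (inverse (OR (prop_x MU MY p x) (prop_xu MY p x u))) * cond_u_xa MU MY p x True u)
          = ext_int MU (\<lambda>u. f (inverse (rho MU MY p x u True)) * cond_u_xa MU MY p x True u)"
        unfolding ext_int_def
        by (simp add: rho_eq(1)[OF p x] cong: nn_integral_cong)
      show "max (ext_int MU (\<lambda>u. f (OR (prop_x MU MY p x) (prop_xu MY p x u)) * cond_u_xa MU MY p x True u))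
           (ext_int MU (\<lambda>u. f (inverse (OR (prop_x MU MY p x) (prop_xu MY p x u))) * cond_u_xa MU MY p x True u))
         \<le> ereal \<Gamma>"
        unfolding e1 e2 using D x unfolding D_f_def by blast
    qed
    then show "p \<in> fSM MX MU MY pobs f \<Gamma>" using p unfolding fSM_def by blast
  qed
qed

end
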